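(* Let $(V,B)$ be a real $4$-dimensional vector space with a symmetric bilinear form of signature $(3,1)$, and let $\Delta=\{\alpha,\beta,\gamma,\delta\}$ be a basis of $V$ with $B(\chi,\chi)=1$ and $B(\chi,\xi)=-1$ for all distinct $\chi,\xi\in\Delta$. Let $\Gamma$ be the group generated by the reflections $s_\chi(v)=v-2B(\chi,v)\chi$, $\chi\in\Delta$ (the universal Coxeter group of rank $4$). Let $\mathcal H$ be the affine hyperplane of $V$ containing $\alpha,\beta,\gamma,\delta$, and for $v\notin\mathcal H_0$ (the linear hyperplane parallel to $\mathcal H$) let $\widehat v$ be the intersection point of $\mathbb Rv$ with $\mathcal H$. Let $\mathbb B=\{v:B(v,v)<0\}\cap\mathcal H$ (a projective model of hyperbolic $3$-space, an open ellipsoidal ball) with boundary sphere $\widehat Q=\{v:B(v,v)=0\}\cap\mathcal H$, on which $\Gamma$ acts by $w\cdot x=\widehat{w(x)}$. For $\chi\in\Delta$ let $h_\chi$ be the circle in which $\widehat Q$ meets the face of the tetrahedron $\operatorname{conv}(\Delta)$ opposite to the vertex $\chi$, and let the Apollonian gasket be $\mathcal A=\bigcup_{w\in\Gamma}w\cdot(h_\alpha\cup h_\beta\cup h_\gamma\cup h_\delta)\subseteq\widehat Q$. Then the limit set $\Lambda(\Gamma)$ of $\Gamma$ (the set of accumulation points of $\Gamma\cdot x_0$ for any $x_0\in\mathbb B$) equals the closure of $\mathcal A$ in $\widehat Q$.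
   Context: The action $w\cdot x=\widehat{w(x)}$ is by isometries of the hyperbolic metric on $\mathbb B$ (pulled back from the hyperboloid $\{B(v,v)=-1\}$ component on the side of $\mathcal H$ via radial projection) and extends continuously to the boundary sphere $\widehat Q$; $\Gamma$ acts as a discrete group. The limit set does not depend on the choice of $x_0\in\mathbb B$. *)

theory Defs
  imports "HOL-Analysis.Analysis"
begin

definition signature_3_1 :: "('v::real_vector \<Rightarrow> 'v \<Rightarrow> real) \<Rightarrow> bool" where
  "signature_3_1 B \<longleftrightarrow>
     (\<exists>e :: nat \<Rightarrow> 'v. inj_on e {0..<4} \<and> independent (e ` {0..<4})
        \<and> span (e ` {0..<4}) = UNIV
        \<and> (\<forall>i<4. \<forall>j<4. i \<noteq> j \<longrightarrow> B (e i) (e j) = 0)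
        \<and> (\<forall>i<3. B (e i) (e i) = 1) \<and> B (e 3) (e 3) = -1)"

definition reflB :: "('v::real_vector \<Rightarrow> 'v \<Rightarrow> real) \<Rightarrow> 'v \<Rightarrow> 'v \<Rightarrow> 'v" where
  "reflB B c v = v - (2 * B c v) *\<^sub>R c"

text \<open>The group generated by the reflections s_chi, chi in Delta, as a set of maps V -> V.
  Since every generator is an involution, the monoid generated is the group generated.\<close>
inductive_set refl_group :: "('v::real_vector \<Rightarrow> 'v \<Rightarrow> real) \<Rightarrow> 'v set \<Rightarrow> ('v \<Rightarrow> 'v) set"
  for B \<Delta> where
  id_in: "id \<in> refl_group B \<Delta>"
| step: "c \<in> \<Delta> \<Longrightarrow> w \<in> refl_group B \<Delta> \<Longrightarrow> reflB B c \<circ> w \<in> refl_group B \<Delta>"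

definition hat :: "'v::real_vector set \<Rightarrow> 'v \<Rightarrow> 'v" where
  "hat H v = (THE p. p \<in> H \<and> (\<exists>t::real. p = t *\<^sub>R v))"

definition limit_set :: "('v \<Rightarrow> 'v) set \<Rightarrow> (('v \<Rightarrow> 'v) \<Rightarrow> 'v \<Rightarrow> 'v::topological_space) \<Rightarrow> 'v \<Rightarrow> 'v set" where
  "limit_set G act x0 = {x. x islimpt ((\<lambda>w. act w x0) ` G)}"

end

theory Submission
  imports Defs
begin


locale apo =
  fixes B :: "'v::euclidean_space \<Rightarrow> 'v \<Rightarrow> real"
    and \<alpha> \<beta> \<gamma> \<delta> :: 'v
  assumes bil: "bilinear B"
    and sym: "\<And>u v. B u v = B v u"
    and dist: "distinct [\<alpha>, \<beta>, \<gamma>, \<delta>]"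
    and spanD: "span {\<alpha>, \<beta>, \<gamma>, \<delta>} = UNIV"
    and diag: "\<And>c. c \<in> {\<alpha>, \<beta>, \<gamma>, \<delta>} \<Longrightarrow> B c c = 1"
    and offdiag: "\<And>c d. c \<in> {\<alpha>, \<beta>, \<gamma>, \<delta>} \<Longrightarrow> d \<in> {\<alpha>, \<beta>, \<gamma>, \<delta>} \<Longrightarrow> c \<noteq> d
                  \<Longrightarrow> B c d = -1"
begin

definition "D = {\<alpha>, \<beta>, \<gamma>, \<delta>}"
definition "sig = \<alpha> + \<beta> + \<gamma> + \<delta>"
definition "S v = - B sig v / 2"
definition "co c v = B c v / 2 + S v / 2"

lemma finD: "finite D" by (simp add: D_def)
lemma cardD: "card D = 4" using dist by (simp add: D_def)

lemma linB: "linear (B u)" using bil by (simp add: bilinear_def)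
lemma linB': "linear (\<lambda>x. B x v)" using bil by (simp add: bilinear_def)
lemma Badd: "B (x + y) z = B x z + B y z" "B z (x + y) = B z x + B z y"
  using bil by (simp_all add: bilinear_ladd bilinear_radd)
lemma Bscale: "B (c *\<^sub>R x) z = c * B x z" "B z (c *\<^sub>R x) = c * B z x"
  using bil by (simp_all add: bilinear_lmul bilinear_rmul)
lemma Bdiff: "B (x - y) z = B x z - B y z" "B z (x - y) = B z x - B z y"
  using bil by (simp_all add: bilinear_lsub bilinear_rsub)
lemma Bneg: "B (- x) z = - B x z" "B z (- x) = - B z x"
  using bil by (simp_all add: bilinear_lneg bilinear_rneg)
lemma Bzero: "B 0 z = 0" "B z 0 = 0"
  using bil by (simp_all add: bilinear_lzero bilinear_rzero)
lemma Sadd: "S (x + y) = S x + S y" by (simp add: S_def Badd field_simps)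
lemma Sscale: "S (c *\<^sub>R x) = c * S x" by (simp add: S_def Bscale field_simps)
lemma Sdiff: "S (x - y) = S x - S y" by (simp add: S_def Bdiff field_simps)
lemma Sneg: "S (- x) = - S x" by (simp add: S_def Bneg field_simps)
lemma linS: "linear S" by (rule linearI) (simp_all add: Sadd Sscale)
lemma coadd: "co c (x + y) = co c x + co c y" by (simp add: co_def Badd Sadd field_simps)
lemma coscale: "co c (k *\<^sub>R x) = k * co c x" by (simp add: co_def Bscale Sscale field_simps)
lemma lin_co: "linear (co c)" by (rule linearI) (simp_all add: coadd coscale)
lemma contB: "bounded_bilinear B" using bil bilinear_conv_bounded_bilinear by blast

lemma inD: "x \<in> D \<longleftrightarrow> x = \<alpha> \<or> x = \<beta> \<or> x = \<gamma> \<or> x = \<delta>" by (simp add: D_def)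
lemma diag': "c \<in> D \<Longrightarrow> B c c = 1" using diag by (simp add: D_def)
lemma off': "c \<in> D \<Longrightarrow> d \<in> D \<Longrightarrow> c \<noteq> d \<Longrightarrow> B c d = -1" using offdiag by (simp add: D_def)

lemma Boff: "B \<alpha> \<beta> = -1" "B \<alpha> \<gamma> = -1" "B \<alpha> \<delta> = -1" "B \<beta> \<gamma> = -1" "B \<beta> \<delta> = -1" "B \<gamma> \<delta> = -1"
  "B \<beta> \<alpha> = -1" "B \<gamma> \<alpha> = -1" "B \<delta> \<alpha> = -1" "B \<gamma> \<beta> = -1" "B \<delta> \<beta> = -1" "B \<delta> \<gamma> = -1"
  "B \<alpha> \<alpha> = 1" "B \<beta> \<beta> = 1" "B \<gamma> \<gamma> = 1" "B \<delta> \<delta> = 1"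
  using dist by (auto intro!: offdiag diag)

lemma Bsig: assumes "x \<in> D" shows "B sig x = -2"
proof -
  have "B sig x = B \<alpha> x + B \<beta> x + B \<gamma> x + B \<delta> x" by (simp add: sig_def Badd)
  also have "\<dots> = -2"
    using assms dist unfolding inD
    by (elim disjE) (simp_all add: Boff)
  finally show ?thesis .
qed

lemma SD: "x \<in> D \<Longrightarrow> S x = 1" by (simp add: S_def Bsig)

lemma coD: "c \<in> D \<Longrightarrow> x \<in> D \<Longrightarrow> co c x = (if c = x then 1 else 0)"
  by (simp add: co_def SD diag' off')

lemma expand: "v = (\<Sum>c\<in>D. co c v *\<^sub>R c)"
proof -
  have "v \<in> span D" using spanD by (simp add: D_def)
  then obtain u where u: "v = (\<Sum>c\<in>D. u c *\<^sub>R c)" using span_finite[OF finD] by auto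
  have "co x v = u x" if "x \<in> D" for x
  proof -
    have "co x v = (\<Sum>c\<in>D. co x (u c *\<^sub>R c))" unfolding u by (rule linear_sum[OF lin_co])
    also have "\<dots> = (\<Sum>c\<in>D. (if x = c then u c else 0))"
      by (rule sum.cong) (use that in \<open>simp_all add: coscale coD\<close>)
    also have "\<dots> = u x" using that finD by (simp add: sum.delta')
    finally show ?thesis .
  qed
  then show ?thesis by (subst u) (rule sum.cong, simp_all)
qed

lemma S_co: "S v = (\<Sum>c\<in>D. co c v)"
proof -
  have "S v = (\<Sum>c\<in>D. S (co c v *\<^sub>R c))" by (subst expand) (rule linear_sum[OF linS])
  also have "\<dots> = (\<Sum>c\<in>D. co c v)" by (rule sum.cong) (simp_all add: Sscale SD)
  finally show ?thesis .
qed

lemma B_co: "B u v = 2 * (\<Sum>c\<in>D. co c u * co c v) - S u * S v"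
proof -
  have "B u v = (\<Sum>c\<in>D. B (co c u *\<^sub>R c) v)" by (subst expand) (rule linear_sum[OF linB'])
  also have "\<dots> = (\<Sum>c\<in>D. co c u * (2 * co c v - S v))"
    by (rule sum.cong) (simp_all add: Bscale co_def)
  also have "\<dots> = 2 * (\<Sum>c\<in>D. co c u * co c v) - S u * S v"
    by (simp add: S_co[of u] algebra_simps sum_subtractf sum_distrib_left sum_distrib_right)
  finally show ?thesis .
qed

lemma co_zero: "(\<forall>c\<in>D. co c v = 0) \<Longrightarrow> v = 0"
  by (subst expand) simp

lemma L0: assumes "S v = 0" shows "B v v \<ge> 0" "B v v = 0 \<Longrightarrow> v = 0"
proof -
  have e: "B v v = 2 * (\<Sum>c\<in>D. (co c v)^2)" using B_co[of v v] assms by (simp add: power2_eq_square)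
  show "B v v \<ge> 0" unfolding e by (simp add: sum_nonneg)
  assume "B v v = 0"
  then have "(\<Sum>c\<in>D. (co c v)^2) = 0" using e by simp
  then have "\<forall>c\<in>D. (co c v)^2 = 0" using sum_nonneg_eq_0_iff[OF finD, of "\<lambda>c. (co c v)^2"] by simp
  then show "v = 0" by (intro co_zero) simp
qed

lemma S_nonzero: "B v v \<le> 0 \<Longrightarrow> v \<noteq> 0 \<Longrightarrow> S v \<noteq> 0"
  using L0 by fastforce

lemma quad: "B (x *\<^sub>R u - y *\<^sub>R v) (x *\<^sub>R u - y *\<^sub>R v) = x^2 * B u u - 2 * x * y * B u v + y^2 * B v v"
  by (simp add: Bdiff Bscale sym[of v u] power2_eq_square algebra_simps)

lemma L9: assumes "B u u = 0" "B v v = 0" "B u v = 0" shows "S v *\<^sub>R u = S u *\<^sub>R v"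
proof -
  let ?w = "S v *\<^sub>R u - S u *\<^sub>R v"
  have "S ?w = 0" by (simp add: Sdiff Sscale)
  moreover have "B ?w ?w = 0" unfolding quad using assms by simp
  ultimately show ?thesis using L0(2) by (metis eq_iff_diff_eq_0)
qed

lemma L10: assumes "B u u < 0" "B b b = 0" "b \<noteq> 0" shows "B u b \<noteq> 0"
proof
  assume h: "B u b = 0"
  let ?w = "S b *\<^sub>R u - S u *\<^sub>R b"
  have Sb: "S b \<noteq> 0" using S_nonzero assms by simp
  have "S ?w = 0" by (simp add: Sdiff Sscale)
  then have "B ?w ?w \<ge> 0" by (rule L0)
  moreover have "B ?w ?w = (S b)^2 * B u u" unfolding quad using assms h by simp
  moreover have "(S b)^2 * B u u < 0" using Sb assms by (simp add: mult_pos_neg)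
  ultimately show False by simp
qed

lemma nondeg: assumes "\<And>u. B u x = B u y" shows "x = y"
proof -
  have "co c (x - y) = 0" if "c \<in> D" for c
    using assms[of c] assms[of sig] by (simp add: co_def S_def Bdiff)
  then have "x - y = 0" by (intro co_zero) auto
  then show ?thesis by simp
qed

definition "H = affine hull D"
definition "Gam = refl_group B D"
definition "Lat = {v. \<forall>c\<in>D. co c v \<in> \<int>}"

lemma H_eq: "H = {v. S v = 1}"
proof (intro set_eqI iffI)
  fix y assume "y \<in> H"
  then obtain u where u: "sum u D = 1" "y = (\<Sum>v\<in>D. u v *\<^sub>R v)"
    unfolding H_def affine_hull_finite[OF finD] by auto
  have "S y = (\<Sum>v\<in>D. S (u v *\<^sub>R v))" unfolding u(2) by (rule linear_sum[OF linS])
  also have "\<dots> = sum u D" by (rule sum.cong) (simp_all add: Sscale SD)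
  finally show "y \<in> {v. S v = 1}" using u by simp
next
  fix y assume "y \<in> {v. S v = 1}"
  then have "sum (\<lambda>c. co c y) D = 1" using S_co[of y] by simp
  moreover have "y = (\<Sum>c\<in>D. co c y *\<^sub>R c)" by (rule expand)
  ultimately show "y \<in> H" unfolding H_def affine_hull_finite[OF finD]
    by (intro CollectI exI[of _ "\<lambda>c. co c y"]) simp
qed

lemma hat_eq: assumes "S v \<noteq> 0" shows "hat H v = (1 / S v) *\<^sub>R v"
  unfolding hat_def
proof (rule the_equality)
  show "(1 / S v) *\<^sub>R v \<in> H \<and> (\<exists>t. (1 / S v) *\<^sub>R v = t *\<^sub>R v)"
    using assms by (auto simp: H_eq Sscale)
next
  fix p assume "p \<in> H \<and> (\<exists>t. p = t *\<^sub>R v)"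
  then obtain t where "p = t *\<^sub>R v" "S p = 1" by (auto simp: H_eq)
  then have "t = 1 / S v" using assms by (simp add: Sscale field_simps)
  then show "p = (1 / S v) *\<^sub>R v" using \<open>p = t *\<^sub>R v\<close> by simp
qed

lemma hat_scale: assumes "S v \<noteq> 0" "k \<noteq> 0" shows "hat H (k *\<^sub>R v) = hat H v"
  using assms by (simp add: hat_eq Sscale)

lemma refl_lin: "linear (reflB B c)"
  by (rule linearI) (simp_all add: reflB_def Badd Bscale algebra_simps)

lemma refl_iso: assumes "c \<in> D" shows "B (reflB B c u) (reflB B c v) = B u v"
  using diag'[OF assms] by (simp add: reflB_def Bdiff Bscale sym[of u c] sym[of v c] algebra_simps)

lemma refl_inv: assumes "c \<in> D" shows "reflB B c (reflB B c v) = v"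
  using diag'[OF assms] by (simp add: reflB_def Bdiff Bscale algebra_simps)

lemma Lat_S: "v \<in> Lat \<Longrightarrow> S v \<in> \<int>"
  unfolding Lat_def S_co by (auto intro: Ints_sum)

lemma refl_Lat: assumes "c \<in> D" "v \<in> Lat" shows "reflB B c v \<in> Lat"
proof -
  have Bc: "B c v \<in> \<int>"
  proof -
    have "B c v = 2 * co c v - S v" by (simp add: co_def)
    then show ?thesis using assms Lat_S unfolding Lat_def by auto
  qed
  show ?thesis unfolding Lat_def mem_Collect_eq
  proof (intro ballI)
    fix d assume d: "d \<in> D"
    have "co d (reflB B c v) = co d v - 2 * B c v * co d c"
      by (simp add: reflB_def co_def Bdiff Bscale Sdiff Sscale) (simp add: field_simps sym[of c d])
    then show "co d (reflB B c v) \<in> \<int>" using assms d Bc coD[OF d assms(1)] unfolding Lat_def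
      by auto
  qed
qed

lemma D_Lat: "c \<in> D \<Longrightarrow> c \<in> Lat"
  unfolding Lat_def using coD by auto

lemma G_lin: "w \<in> Gam \<Longrightarrow> linear w"
  unfolding Gam_def by (induction rule: refl_group.induct) (auto intro: linear_compose[unfolded o_def] refl_lin linear_ident simp: id_def)

lemma G_iso: "w \<in> Gam \<Longrightarrow> B (w u) (w v) = B u v"
  unfolding Gam_def by (induction arbitrary: u v rule: refl_group.induct) (auto simp: refl_iso)

lemma G_Lat: "w \<in> Gam \<Longrightarrow> v \<in> Lat \<Longrightarrow> w v \<in> Lat"
  unfolding Gam_def by (induction arbitrary: v rule: refl_group.induct) (auto simp: refl_Lat)

lemma G_comp: "w1 \<in> Gam \<Longrightarrow> w2 \<in> Gam \<Longrightarrow> w1 \<circ> w2 \<in> Gam"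
  unfolding Gam_def
proof (induction rule: refl_group.induct)
  case id_in then show ?case by simp
next
  case (step c w) then show ?case by (metis comp_assoc refl_group.step)
qed

lemma G_gen: "c \<in> D \<Longrightarrow> reflB B c \<in> Gam"
  unfolding Gam_def by (metis comp_id refl_group.id_in refl_group.step)

lemma G_step: "c \<in> D \<Longrightarrow> w \<in> Gam \<Longrightarrow> reflB B c \<circ> w \<in> Gam"
  unfolding Gam_def by (rule refl_group.step)

lemma G_id: "id \<in> Gam" unfolding Gam_def by (rule refl_group.id_in)

lemma G_inv: "w \<in> Gam \<Longrightarrow> \<exists>h\<in>Gam. h \<circ> w = id \<and> w \<circ> h = id"
  unfolding Gam_def
proof (induction rule: refl_group.induct)
  case id_in then show ?case using G_id unfolding Gam_def by (intro bexI[of _ id]) auto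
next
  case (step c w)
  note 2 = step[folded Gam_def]
  then obtain h where h: "h \<in> Gam" "h \<circ> w = id" "w \<circ> h = id" by blast
  have "h \<circ> reflB B c \<in> Gam" using G_comp[OF h(1) G_gen[OF 2(1)]] .
  moreover have "(h \<circ> reflB B c) \<circ> (reflB B c \<circ> w) = id"
    using h(2) refl_inv[OF 2(1)] by (auto simp: fun_eq_iff)
  moreover have "(reflB B c \<circ> w) \<circ> (h \<circ> reflB B c) = id"
    using h(3) refl_inv[OF 2(1)] by (auto simp: fun_eq_iff)
  ultimately show ?case unfolding Gam_def by blast
qed

lemma G_inj: assumes "w \<in> Gam" shows "inj w"
proof -
  obtain h where "h \<circ> w = id" using G_inv[OF assms] by blast
  then show ?thesis by (metis inj_on_id inj_on_imageI2)
qed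

lemma blS: "bounded_linear S" using linS linear_conv_bounded_linear by blast

lemma tendsto_nrm: assumes "(z \<longlongrightarrow> z0) F" "S z0 \<noteq> 0"
  shows "((\<lambda>n. (1 / S (z n)) *\<^sub>R z n) \<longlongrightarrow> (1 / S z0) *\<^sub>R z0) F"
  by (intro tendsto_intros bounded_linear.tendsto[OF blS] assms)

lemma tendsto_B: "(f \<longlongrightarrow> a) F \<Longrightarrow> (g \<longlongrightarrow> b) F \<Longrightarrow> ((\<lambda>n. B (f n) (g n)) \<longlongrightarrow> B a b) F"
  by (rule bounded_bilinear.tendsto[OF contB])

lemma G_zero: "w \<in> Gam \<Longrightarrow> w 0 = 0" using G_lin linear_0 by blast
lemma G_scale: "w \<in> Gam \<Longrightarrow> w (k *\<^sub>R v) = k *\<^sub>R w v" using G_lin linear_scale by blast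
lemma G_add: "w \<in> Gam \<Longrightarrow> w (u + v) = w u + w v" using G_lin linear_add by blast
lemma G_diff: "w \<in> Gam \<Longrightarrow> w (u - v) = w u - w v" using G_lin linear_diff by blast
lemma G_nz: "w \<in> Gam \<Longrightarrow> v \<noteq> 0 \<Longrightarrow> w v \<noteq> 0"
  using G_inj G_zero by (metis injD)

end

locale apo0 = apo +
  fixes x0 assumes x0neg: "B x0 x0 < 0" and x0S: "S x0 = 1"
begin

definition "act w x = hat H (w x)"
definition "Orb = (\<lambda>w. act w x0) ` Gam"
definition "Lam = {x. x islimpt Orb}"

lemma x0nz: "x0 \<noteq> 0" using x0S by (auto simp: S_def Bzero)

lemma orbS: "w \<in> Gam \<Longrightarrow> S (w x0) \<noteq> 0"
  using S_nonzero[of "w x0"] G_iso[of w x0 x0] x0neg G_nz x0nz by fastforce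

lemma orb_eq: "w \<in> Gam \<Longrightarrow> act w x0 = (1 / S (w x0)) *\<^sub>R w x0"
  by (simp add: act_def hat_eq orbS)

lemma orb_props: assumes "w \<in> Gam" shows "S (act w x0) = 1" "B (act w x0) (act w x0) < 0"
proof -
  show "S (act w x0) = 1" using orbS[OF assms] by (simp add: orb_eq[OF assms] Sscale)
  have "B (act w x0) (act w x0) = (1 / S (w x0))^2 * B x0 x0"
    by (simp add: orb_eq[OF assms] Bscale G_iso[OF assms] power2_eq_square)
  then show "B (act w x0) (act w x0) < 0" using orbS[OF assms] x0neg
    by (simp add: mult_pos_neg)
qed

lemma closedK: "closed {v. S v = 1 \<and> B v v \<le> 0}"
proof -
  have c1: "continuous_on UNIV S" using blS linear_continuous_on by blast
  have c2: "continuous_on UNIV (\<lambda>v. B v v)"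
    by (intro bounded_bilinear.continuous_on[OF contB] continuous_on_id)
  have "closed {v. S v = 1}" by (intro closed_Collect_eq c1 continuous_on_const) 
  moreover have "closed {v. B v v \<le> 0}" by (intro closed_Collect_le c2 continuous_on_const) 
  ultimately show ?thesis by (simp add: Collect_conj_eq closed_Int)
qed

lemma Lam_props: assumes "p \<in> Lam" shows "S p = 1" "B p p \<le> 0"
proof -
  have "Orb \<subseteq> {v. S v = 1 \<and> B v v \<le> 0}"
    unfolding Orb_def using orb_props by (auto intro: less_imp_le)
  then have "p islimpt {v. S v = 1 \<and> B v v \<le> 0}" using assms islimpt_subset unfolding Lam_def by blast
  then have "p \<in> {v. S v = 1 \<and> B v v \<le> 0}" using closedK closed_limpt by blast
  then show "S p = 1" "B p p \<le> 0" by auto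
qed

lemma Lam_closed: "closed Lam" unfolding Lam_def by (rule closed_limpts)

lemma Lam_intro: assumes "\<And>n. g n \<in> Gam" "(\<lambda>n. act (g n) x0) \<longlonglongrightarrow> p" "\<And>n. act (g n) x0 \<noteq> p"
  shows "p \<in> Lam"
  unfolding Lam_def mem_Collect_eq islimpt_sequential
  using assms unfolding Orb_def by (intro exI[of _ "\<lambda>n. act (g n) x0"]) auto

lemma Lam_seq: assumes "p \<in> Lam"
  obtains g where "\<And>n. g n \<in> Gam" "(\<lambda>n. act (g n) x0) \<longlonglongrightarrow> p" "\<And>n. act (g n) x0 \<noteq> p"
proof -
  obtain f where f: "\<And>n. f n \<in> Orb - {p}" "f \<longlonglongrightarrow> p"
    using assms unfolding Lam_def mem_Collect_eq islimpt_sequential by blast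
  have "\<forall>n. \<exists>w. w \<in> Gam \<and> f n = act w x0" using f(1) unfolding Orb_def by blast
  then obtain g where g: "\<And>n. g n \<in> Gam \<and> f n = act (g n) x0" by metis
  have fe: "f = (\<lambda>n. act (g n) x0)" using g by auto
  show ?thesis using that[of g] g f unfolding fe by blast
qed

lemma act_act: assumes "w \<in> Gam" "g \<in> Gam" shows "act w (act g x0) = act (w \<circ> g) x0"
proof -
  have S1: "S (w (g x0)) \<noteq> 0" using orbS[OF G_comp[OF assms]] by simp
  have "act w (act g x0) = hat H (w ((1 / S (g x0)) *\<^sub>R g x0))"
    by (simp only: orb_eq[OF assms(2)] act_def[of w])
  also have "\<dots> = hat H ((1 / S (g x0)) *\<^sub>R w (g x0))" by (simp only: G_scale[OF assms(1)])
  also have "\<dots> = hat H (w (g x0))" by (rule hat_scale) (use S1 orbS[OF assms(2)] in auto)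
  also have "\<dots> = act (w \<circ> g) x0" by (simp add: act_def)
  finally show ?thesis .
qed

lemma Lam_inv: assumes "p \<in> Lam" "w \<in> Gam" shows "act w p \<in> Lam"
proof -
  obtain g where g: "\<And>n. g n \<in> Gam" "(\<lambda>n. act (g n) x0) \<longlonglongrightarrow> p" "\<And>n. act (g n) x0 \<noteq> p"
    using Lam_seq[OF assms(1)] by blast
  have Sp: "S p = 1" and Bp: "B p p \<le> 0" using Lam_props[OF assms(1)] by auto
  have pnz: "p \<noteq> 0" using Sp by (auto simp: S_def Bzero)
  have Swp: "S (w p) \<noteq> 0" using S_nonzero[of "w p"] G_iso[OF assms(2)] Bp G_nz[OF assms(2) pnz] by simp
  let ?f = "\<lambda>n. act (g n) x0"
  have lim1: "(\<lambda>n. w (?f n)) \<longlonglongrightarrow> w p"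
    using g(2) G_lin[OF assms(2)] linear_conv_bounded_linear bounded_linear.tendsto by blast
  have Swf: "S (w (?f n)) \<noteq> 0" for n
    using S_nonzero[of "w (?f n)"] G_iso[OF assms(2)] orb_props(2)[OF g(1)[of n]] G_nz[OF assms(2)] 
    by (metis Bzero(1) less_irrefl order.strict_implies_order)
  have e: "act w (?f n) = (1 / S (w (?f n))) *\<^sub>R w (?f n)" for n
    unfolding act_def[of w "?f n"] by (rule hat_eq[OF Swf])
  have lim: "(\<lambda>n. act w (?f n)) \<longlonglongrightarrow> act w p"
    unfolding e using tendsto_nrm[OF lim1 Swp] by (simp add: act_def hat_eq Swp)
  have ne: "act w (?f n) \<noteq> act w p" for n
  proof
    assume h: "act w (?f n) = act w p"
    let ?k = "S (w (?f n)) / S (w p)"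
    have h2: "(1 / S (w (?f n))) *\<^sub>R w (?f n) = (1 / S (w p)) *\<^sub>R w p"
      using h unfolding e act_def[of w p] hat_eq[OF Swp] .
    then have "S (w (?f n)) *\<^sub>R ((1 / S (w (?f n))) *\<^sub>R w (?f n)) = S (w (?f n)) *\<^sub>R ((1 / S (w p)) *\<^sub>R w p)"
      by simp
    then have "w (?f n) = ?k *\<^sub>R w p" using Swf[of n] by simp
    then have "w (?f n - ?k *\<^sub>R p) = 0" by (simp add: G_diff[OF assms(2)] G_scale[OF assms(2)])
    then have "?f n - ?k *\<^sub>R p = 0" using G_nz[OF assms(2)] by blast
    then have fe: "?f n = ?k *\<^sub>R p" by simp
    then have "?k = 1" using orb_props(1)[OF g(1)[of n]] Sp by (metis Sscale mult.right_neutral)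
    then show False using fe g(3)[of n] by simp
  qed
  show ?thesis
    using Lam_intro[of "\<lambda>n. w \<circ> g n" "act w p"] G_comp[OF assms(2) g(1)] act_act[OF assms(2) g(1)] lim ne
    by simp
qed

lemma Dfacts: assumes "a \<in> D" "b \<in> D" "a \<noteq> b" shows "B a a = 1" "B b b = 1" "B a b = -1" "B b a = -1"
  using assms diag' off' by auto

lemma Pform: assumes "a \<in> D" "b \<in> D" "a \<noteq> b"
  shows "reflB B a (reflB B b v) = v - (2 * B a v + 4 * B b v) *\<^sub>R a - (2 * B b v) *\<^sub>R b"
  using Dfacts[OF assms] by (simp add: reflB_def Bdiff Bscale algebra_simps)

lemma Ppow: assumes "a \<in> D" "b \<in> D" "a \<noteq> b"
  shows "((reflB B a \<circ> reflB B b) ^^ n) v = v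
     + (- real n * (2 * B a v + 4 * B b v) - 2 * real n * (real n - 1) * (B a v + B b v)) *\<^sub>R a
     + (- real n * (2 * B b v) - 2 * real n * (real n - 1) * (B a v + B b v)) *\<^sub>R b"
proof (induction n)
  case 0 then show ?case by simp
next
  case (Suc n)
  define x where "x = (- real n * (2 * B a v + 4 * B b v) - 2 * real n * (real n - 1) * (B a v + B b v))"
  define y where "y = (- real n * (2 * B b v) - 2 * real n * (real n - 1) * (B a v + B b v))"
  have "((reflB B a \<circ> reflB B b) ^^ Suc n) v = reflB B a (reflB B b (v + x *\<^sub>R a + y *\<^sub>R b))"
    unfolding x_def y_def by (subst Suc.IH[symmetric]) simp
  also have "\<dots> = v + (x + (-(2 * B a v + 4 * B b v) + 2 * x - 2 * y)) *\<^sub>R a + (y + (- 2 * B b v + 2 * x - 2 * y)) *\<^sub>R b"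
    unfolding Pform[OF assms] using Dfacts[OF assms]
    by (intro nondeg) (simp add: Badd Bscale Bdiff algebra_simps)
  also have "x + (-(2 * B a v + 4 * B b v) + 2 * x - 2 * y) = (- real (Suc n) * (2 * B a v + 4 * B b v) - 2 * real (Suc n) * (real (Suc n) - 1) * (B a v + B b v))"
    by (simp add: x_def y_def algebra_simps)
  also have "y + (- 2 * B b v + 2 * x - 2 * y) = (- real (Suc n) * (2 * B b v) - 2 * real (Suc n) * (real (Suc n) - 1) * (B a v + B b v))"
    by (simp add: x_def y_def algebra_simps)
  finally show ?case .
qed

lemma Ppow_G: assumes "a \<in> D" "b \<in> D" shows "(reflB B a \<circ> reflB B b) ^^ n \<in> Gam"
proof (induction n)
  case 0 then show ?case by (simp only: funpow.simps(1) G_id)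
next
  case (Suc n)
  then show ?case using G_step[OF assms(1) G_step[OF assms(2) Suc]] by (simp only: funpow.simps(2) o_assoc)
qed

end

context apo0 begin

lemma nrm_scale: "k \<noteq> 0 \<Longrightarrow> (1 / S (k *\<^sub>R v)) *\<^sub>R (k *\<^sub>R v) = (1 / S v) *\<^sub>R v"
  by (simp add: Sscale)

lemma tang: assumes ab: "a \<in> D" "b \<in> D" "a \<noteq> b" shows "(1/2) *\<^sub>R (a + b) \<in> Lam"
proof -
  define P where "P = reflB B a \<circ> reflB B b"
  define g where "g n = P ^^ Suc n" for n
  define p where "p = B a x0"
  define q where "q = B b x0"
  have gG: "g n \<in> Gam" for n unfolding g_def P_def using Ppow_G ab by blast
  define m where "m n = real (Suc n)" for n
  have m0: "m n \<noteq> 0" for n by (simp add: m_def)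
  define z where "z n = (1 / (m n)^2) *\<^sub>R g n x0" for n
  have gx: "g n x0 = x0 + (- m n * (2 * p + 4 * q) - 2 * m n * (m n - 1) * (p + q)) *\<^sub>R a
        + (- m n * (2 * q) - 2 * m n * (m n - 1) * (p + q)) *\<^sub>R b" for n
    unfolding g_def P_def m_def p_def q_def using Ppow[OF ab, of "Suc n" x0] by (simp add: sym[of x0])
  have sc1: "(- m n * (2 * p + 4 * q) - 2 * m n * (m n - 1) * (p + q)) / (m n)^2
      = - (2 * p + 4 * q) * inverse (m n) - 2 * (p + q) * (1 - inverse (m n))" for n
    using m0[of n] by (simp add: field_simps power2_eq_square)
  have sc2: "(- m n * (2 * q) - 2 * m n * (m n - 1) * (p + q)) / (m n)^2
      = - (2 * q) * inverse (m n) - 2 * (p + q) * (1 - inverse (m n))" for n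
    using m0[of n] by (simp add: field_simps power2_eq_square)
  have ze: "z n = (inverse (m n))^2 *\<^sub>R x0
      + (- (2 * p + 4 * q) * inverse (m n) - 2 * (p + q) * (1 - inverse (m n))) *\<^sub>R a
      + (- (2 * q) * inverse (m n) - 2 * (p + q) * (1 - inverse (m n))) *\<^sub>R b" for n
    unfolding z_def gx sc1[symmetric] sc2[symmetric]
    by (simp add: scaleR_add_right divide_inverse power_inverse mult.commute)
  have im: "(\<lambda>n. inverse (m n)) \<longlonglongrightarrow> 0" unfolding m_def by (rule LIMSEQ_inverse_real_of_nat)
  define L where "L = (- 2 * (p + q)) *\<^sub>R a + (- 2 * (p + q)) *\<^sub>R b"
  have zL: "z \<longlonglongrightarrow> L"
  proof -
    have "(\<lambda>n. (inverse (m n))^2 *\<^sub>R x0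
      + (- (2 * p + 4 * q) * inverse (m n) - 2 * (p + q) * (1 - inverse (m n))) *\<^sub>R a
      + (- (2 * q) * inverse (m n) - 2 * (p + q) * (1 - inverse (m n))) *\<^sub>R b) \<longlonglongrightarrow>
      (0^2 *\<^sub>R x0 + (- (2 * p + 4 * q) * 0 - 2 * (p + q) * (1 - 0)) *\<^sub>R a
      + (- (2 * q) * 0 - 2 * (p + q) * (1 - 0)) *\<^sub>R b)"
      by (intro tendsto_intros im)
    then show ?thesis unfolding ze[abs_def] L_def by simp
  qed
  have tnull: "B (a + b) (a + b) = 0" using Dfacts[OF ab] by (simp add: Badd)
  have tnz: "a + b \<noteq> 0"
  proof
    assume "a + b = 0" then have "S (a + b) = 0" by (simp add: S_def Bzero)
    then show False using SD ab by (simp add: Sadd)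
  qed
  have pq: "p + q \<noteq> 0"
    using L10[OF x0neg tnull tnz] by (simp add: p_def q_def Badd sym[of x0])
  have SL: "S L = - 4 * (p + q)" using SD ab by (simp add: L_def Sadd Sscale)
  have lim: "(\<lambda>n. (1 / S (z n)) *\<^sub>R z n) \<longlonglongrightarrow> (1 / S L) *\<^sub>R L"
    by (rule tendsto_nrm[OF zL]) (use SL pq in simp)
  have cc: "(1/(-4*(p+q))) * (-2*(p+q)) = 1/2" using pq by (simp add: field_simps)
  have Lv: "(1 / S L) *\<^sub>R L = (1/2) *\<^sub>R (a + b)"
  proof -
    have "(1 / S L) *\<^sub>R L = (1/(-4*(p+q))) *\<^sub>R L" using SL by simp
    also have "\<dots> = ((1/(-4*(p+q))) * (-2*(p+q))) *\<^sub>R (a + b)"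
      unfolding L_def by (simp add: scaleR_add_right)
    finally show ?thesis unfolding cc .
  qed
  have actz: "act (g n) x0 = (1 / S (z n)) *\<^sub>R z n" for n
    unfolding orb_eq[OF gG] z_def using m0[of n] by (subst nrm_scale) simp_all
  show ?thesis
  proof (rule Lam_intro[of g])
    show "g n \<in> Gam" for n by (rule gG)
    show "(\<lambda>n. act (g n) x0) \<longlonglongrightarrow> (1/2) *\<^sub>R (a + b)" unfolding actz using lim Lv by simp
    show "act (g n) x0 \<noteq> (1/2) *\<^sub>R (a + b)" for n
      using orb_props(2)[OF gG[of n]] tnull by (auto simp: Bscale)
  qed
qed


lemma D3facts: assumes "a \<in> D" "b \<in> D" "c \<in> D" "a \<noteq> b" "a \<noteq> c" "b \<noteq> c"
  shows "B a a = 1" "B b b = 1" "B c c = 1" "B a b = -1" "B b a = -1" "B a c = -1" "B c a = -1"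
    "B b c = -1" "B c b = -1"
  using assms diag' off' by auto

definition qv where
  "qv (a::'a) b c (m::real) (n::real) = m^2 *\<^sub>R a + n^2 *\<^sub>R b + (m + n)^2 *\<^sub>R c"

lemma qv_neg: "qv a b c (-m) (-n) = qv a b c m n"
  by (simp add: qv_def power2_eq_square algebra_simps)

lemma qv_scale: "qv a b c (k * m) (k * n) = k^2 *\<^sub>R qv a b c m n"
proof -
  have "(k*m+k*n)^2 = k^2 * (m+n)^2" by algebra
  then show ?thesis by (simp add: qv_def power_mult_distrib scaleR_right_distrib)
qed

lemma qv_S: assumes "a \<in> D" "b \<in> D" "c \<in> D" shows "S (qv a b c m n) = m^2 + n^2 + (m+n)^2"
  using assms by (simp add: qv_def Sadd Sscale SD)

context
  fixes a b c assumes abc: "a \<in> D" "b \<in> D" "c \<in> D" "a \<noteq> b" "a \<noteq> c" "b \<noteq> c"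
begin

lemma rA: "reflB B a (qv a b c m n) = qv a b c (m + 2*n) (-n)"
  using D3facts[OF abc] by (intro nondeg) (simp add: qv_def reflB_def Badd Bdiff Bscale power2_eq_square algebra_simps)

lemma rB: "reflB B b (qv a b c m n) = qv a b c (-m) (2*m + n)"
  using D3facts[OF abc] by (intro nondeg) (simp add: qv_def reflB_def Badd Bdiff Bscale power2_eq_square algebra_simps)

lemma rC: "reflB B c (qv a b c m n) = qv a b c m (-n)"
  using D3facts[OF abc] by (intro nondeg) (simp add: qv_def reflB_def Badd Bdiff Bscale power2_eq_square algebra_simps)

definition "bases = {qv a b c 1 0, qv a b c 0 1, qv a b c 1 (-1)}"

definition "good v \<longleftrightarrow> (\<exists>w\<in>Gam. \<exists>k t. k \<noteq> 0 \<and> t \<in> bases \<and> v = k *\<^sub>R w t)"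

lemma good_refl: assumes "d \<in> D" "good v" shows "good (reflB B d v)"
proof -
  obtain w k t where "w \<in> Gam" "k \<noteq> 0" "t \<in> bases" "v = k *\<^sub>R w t" using assms(2) good_def by auto
  then show ?thesis unfolding good_def
    by (intro bexI[of _ "reflB B d \<circ> w"] exI[of _ k] exI[of _ t])
       (auto intro: G_step[OF assms(1)] simp: linear_scale[OF refl_lin])
qed

lemma good_scale: assumes "k \<noteq> 0" "good v" shows "good (k *\<^sub>R v)"
proof -
  obtain w j t where "w \<in> Gam" "j \<noteq> 0" "t \<in> bases" "v = j *\<^sub>R w t" using assms(2) good_def by auto
  then show ?thesis unfolding good_def using assms(1)
    by (intro bexI[of _ w] exI[of _ "k * j"] exI[of _ t]) auto
qed

lemma good_base: "t \<in> bases \<Longrightarrow> good t"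
  unfolding good_def using G_id by (intro bexI[of _ id] exI[of _ 1] exI[of _ t]) auto

lemma reach_aux: "\<forall>m n. nat \<bar>m\<bar> + nat \<bar>n\<bar> = N \<longrightarrow> (m, n) \<noteq> (0, 0) \<longrightarrow> good (qv a b c (of_int m) (of_int n))"
proof (induction N rule: less_induct)
  case (less N)
  show ?case
  proof (intro allI impI)
    fix m n :: int assume N: "nat \<bar>m\<bar> + nat \<bar>n\<bar> = N" and nz: "(m, n) \<noteq> (0, 0)"
    let ?q = "\<lambda>m n::int. qv a b c (of_int m) (of_int n)"
    have IH: "good (?q m' n')" if "nat \<bar>m'\<bar> + nat \<bar>n'\<bar> < N" "(m', n') \<noteq> (0, 0)" for m' n'
      using less that by blast
    show "good (?q m n)"
    proof -
      consider "n = 0" | "m = 0" | "m = n" "m \<noteq> 0" | "m = - n" "m \<noteq> 0"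
        | "\<bar>n\<bar> < \<bar>m\<bar>" "n \<noteq> 0" "m * n < 0" | "\<bar>n\<bar> < \<bar>m\<bar>" "n \<noteq> 0" "m * n > 0"
        | "\<bar>m\<bar> < \<bar>n\<bar>" "m \<noteq> 0" "m * n < 0" | "\<bar>m\<bar> < \<bar>n\<bar>" "m \<noteq> 0" "m * n > 0"
      proof -
        have s: "m*n < 0 \<or> 0 < m*n" if "n\<noteq>0" "m\<noteq>0" using that by (metis mult_eq_0_iff linorder_neqE)
        have t: "\<bar>n\<bar> < \<bar>m\<bar> \<or> \<bar>m\<bar> < \<bar>n\<bar>" if "m \<noteq> n" "m \<noteq> -n" using that by (auto simp: abs_if)
        show thesis
        proof (cases "n = 0")
          case True then show ?thesis using that(1) by blast
        next
          case n: False
          show ?thesis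
          proof (cases "m = 0")
            case True then show ?thesis using that(2) by blast
          next
            case m: False
            show ?thesis
            proof (cases "m = n")
              case True then show ?thesis using that(3) m by blast
            next
              case mn: False
              show ?thesis
              proof (cases "m = -n")
                case True then show ?thesis using that(4) m by blast
              next
                case False
                then show ?thesis using s[OF n m] t[OF mn False] that(5-8) n m by blast
              qed
            qed
          qed
        qed
      qed
      then show ?thesis
      proof cases
        case 1
        then have "m \<noteq> 0" using nz by auto
        have "?q m n = (of_int m)^2 *\<^sub>R qv a b c 1 0" using 1 qv_scale[of a b c "of_int m" 1 0] by simp
        then show ?thesis using \<open>m \<noteq> 0\<close> good_scale good_base by (simp add: bases_def)
      next
        case 2
        then have "n \<noteq> 0" using nz by auto
        have "?q m n = (of_int n)^2 *\<^sub>R qv a b c 0 1" using 2 qv_scale[of a b c "of_int n" 0 1] by simp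
        then show ?thesis using \<open>n \<noteq> 0\<close> good_scale good_base by (simp add: bases_def)
      next
        case 3
        have "?q m n = (of_int m)^2 *\<^sub>R reflB B c (qv a b c 1 (-1))"
          using 3 qv_scale[of a b c "of_int m" 1 1] by (simp add: rC)
        then show ?thesis using 3 good_scale good_base good_refl abc by (simp add: bases_def)
      next
        case 4
        have "?q m n = (of_int m)^2 *\<^sub>R qv a b c 1 (-1)"
          using 4 qv_scale[of a b c "of_int m" 1 "-1"] by simp
        then show ?thesis using 4 good_scale good_base by (simp add: bases_def)
      next
        case 5
        have e: "?q m n = reflB B a (?q (m + 2*n) (-n))" by (simp add: rA)
        have "good (?q (m + 2*n) (-n))" using 5 N by (intro IH) (auto simp: abs_if mult_less_0_iff split: if_splits)
        then show ?thesis unfolding e using good_refl abc by blast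
      next
        case 6
        have e: "?q m n = reflB B c (reflB B a (?q (m - 2*n) n))" by (simp add: rA rC)
        have "good (?q (m - 2*n) n)" using 6 N by (intro IH) (auto simp: abs_if zero_less_mult_iff split: if_splits)
        then show ?thesis unfolding e using good_refl abc by blast
      next
        case 7
        have e: "?q m n = reflB B b (?q (-m) (n + 2*m))" by (simp add: rB)
        have "good (?q (-m) (n + 2*m))" using 7 N by (intro IH) (auto simp: abs_if mult_less_0_iff split: if_splits)
        then show ?thesis unfolding e using good_refl abc by blast
      next
        case 8
        have e: "?q m n = reflB B c (reflB B b (?q (-m) (2*m - n)))" by (simp add: rB rC)
        have "good (?q (-m) (2*m - n))" using 8 N by (intro IH) (auto simp: abs_if zero_less_mult_iff split: if_splits)
        then show ?thesis unfolding e using good_refl abc by blast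
      qed
    qed
  qed
qed

lemma reach: "(m, n) \<noteq> (0, 0) \<Longrightarrow> good (qv a b c (of_int m) (of_int n))"
  using reach_aux by blast

lemma bases_props: assumes "t \<in> bases" shows "(1/2) *\<^sub>R t \<in> Lam" "B t t = 0" "S t = 2"
proof -
  have "t = a + c \<or> t = b + c \<or> t = a + b" using assms by (auto simp: bases_def qv_def)
  then show "(1/2) *\<^sub>R t \<in> Lam" "B t t = 0" "S t = 2"
    using tang abc D3facts[OF abc] SD by (auto simp: Badd Sadd)
qed

lemma good_Lam: assumes "good v" shows "hat H v \<in> Lam"
proof -
  obtain w k t where w: "w \<in> Gam" "k \<noteq> 0" "t \<in> bases" "v = k *\<^sub>R w t" using assms good_def by auto
  note tp = bases_props[OF w(3)]
  have tnz: "t \<noteq> 0" using tp(3) by (auto simp: S_def Bzero)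
  have Swt: "S (w t) \<noteq> 0" using S_nonzero[of "w t"] G_iso[OF w(1)] tp(2) G_nz[OF w(1) tnz] by simp
  have "act w ((1/2) *\<^sub>R t) \<in> Lam" by (rule Lam_inv[OF tp(1) w(1)])
  moreover have "act w ((1/2) *\<^sub>R t) = hat H v"
    unfolding act_def G_scale[OF w(1)] w(4) using Swt w(2) by (simp add: hat_scale)
  ultimately show ?thesis by simp
qed

lemma circle: assumes "S p = 1" "B p p = 0" "p \<in> convex hull {a, b, c}" shows "p \<in> Lam"
proof -
  obtain x y z where xyz: "0 \<le> x" "0 \<le> y" "0 \<le> z" "x + y + z = 1" "p = x *\<^sub>R a + y *\<^sub>R b + z *\<^sub>R c"
    using assms(3) unfolding convex_hull_3 by auto
  have "B p p = x^2 + y^2 + z^2 - 2*x*y - 2*y*z - 2*x*z"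
    using D3facts[OF abc] unfolding xyz(5) by (simp add: Badd Bscale power2_eq_square algebra_simps)
  then have eq0: "(z - x - y)^2 = 4 * x * y"
    using assms(2) by (simp add: power2_eq_square algebra_simps)
  have sq: "(2 * sqrt x * sqrt y)^2 = 4 * x * y" using xyz by (simp add: power_mult_distrib)
  have eq: "(z - x - y)^2 = (2 * sqrt x * sqrt y)^2" by (metis eq0 sq)
  obtain v where v: "v^2 = y" "(sqrt x + v)^2 = z"
  proof (cases "z - x - y = 2 * sqrt x * sqrt y")
    case True
    then show ?thesis using that[of "sqrt y"] xyz by (simp add: power2_sum algebra_simps)
  next
    case False
    then have "z - x - y = - (2 * sqrt x * sqrt y)" using eq by (metis power2_eq_iff)
    then show ?thesis using that[of "- sqrt y"] xyz by (simp add: power2_diff algebra_simps)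
  qed
  define u where "u = sqrt x"
  have pq: "p = qv a b c u v" unfolding xyz(5) qv_def u_def using v xyz by simp
  define N where "N n = real (Suc n)" for n
  define mk where "mk n = real_of_int \<lfloor>N n * u\<rfloor>" for n
  define nk where "nk n = real_of_int \<lfloor>N n * v\<rfloor>" for n
  have flim: "(\<lambda>n. real_of_int \<lfloor>N n * t\<rfloor> / N n) \<longlonglongrightarrow> t" for t
  proof (rule tendsto_sandwich[where f = "\<lambda>n. t - inverse (N n)" and h = "\<lambda>n. t"])
    have N0: "N n > 0" for n by (simp add: N_def)
    show "\<forall>\<^sub>F n in sequentially. t - inverse (N n) \<le> real_of_int \<lfloor>N n * t\<rfloor> / N n"
    proof (intro always_eventually allI)
      fix n
      have "N n * t - 1 \<le> real_of_int \<lfloor>N n * t\<rfloor>" by linarith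
      then have "(N n * t - 1) / N n \<le> real_of_int \<lfloor>N n * t\<rfloor> / N n"
        using N0[of n] by (intro divide_right_mono) auto
      moreover have "t - inverse (N n) = (N n * t - 1) / N n" using N0[of n] by (simp add: field_simps)
      ultimately show "t - inverse (N n) \<le> real_of_int \<lfloor>N n * t\<rfloor> / N n" by simp
    qed
    show "\<forall>\<^sub>F n in sequentially. real_of_int \<lfloor>N n * t\<rfloor> / N n \<le> t"
    proof (intro always_eventually allI)
      fix n
      have "real_of_int \<lfloor>N n * t\<rfloor> \<le> N n * t" by linarith
      then show "real_of_int \<lfloor>N n * t\<rfloor> / N n \<le> t" using N0[of n] by (simp add: field_simps)
    qed
    have "(\<lambda>n. inverse (N n)) \<longlonglongrightarrow> 0" unfolding N_def by (rule LIMSEQ_inverse_real_of_nat)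
    then show "(\<lambda>n. t - inverse (N n)) \<longlonglongrightarrow> t" using tendsto_diff[OF tendsto_const, of _ 0 sequentially t] by simp
    show "(\<lambda>n. t) \<longlonglongrightarrow> t" by simp
  qed
  define r where "r n = qv a b c (mk n / N n) (nk n / N n)" for n
  have rlim: "r \<longlonglongrightarrow> p"
    unfolding pq r_def qv_def mk_def nk_def by (intro tendsto_intros flim)
  have Sp: "S p \<noteq> 0" using assms by simp
  have hlim: "(\<lambda>n. (1 / S (r n)) *\<^sub>R r n) \<longlonglongrightarrow> (1 / S p) *\<^sub>R p" by (rule tendsto_nrm[OF rlim Sp])
  have pnz: "p \<noteq> 0" using Sp by (auto simp: S_def Bzero)
  have ev: "\<forall>\<^sub>F n in sequentially. r n \<noteq> 0"
    using rlim pnz by (rule tendsto_imp_eventually_ne)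
  have "\<forall>\<^sub>F n in sequentially. (1 / S (r n)) *\<^sub>R r n \<in> Lam"
  proof (rule eventually_mono[OF ev])
    fix n assume rn: "r n \<noteq> 0"
    have N0: "N n \<noteq> 0" by (simp add: N_def)
    have re: "r n = (inverse (N n))^2 *\<^sub>R qv a b c (mk n) (nk n)"
      unfolding r_def using qv_scale[of a b c "inverse (N n)" "mk n" "nk n"] by (simp add: divide_inverse mult.commute)
    have qnz: "qv a b c (mk n) (nk n) \<noteq> 0" using rn re by auto
    then have "(\<lfloor>N n * u\<rfloor>, \<lfloor>N n * v\<rfloor>) \<noteq> (0, 0)" by (auto simp: mk_def nk_def qv_def)
    then have "good (qv a b c (mk n) (nk n))" unfolding mk_def nk_def by (rule reach)
    then have L: "hat H (qv a b c (mk n) (nk n)) \<in> Lam" by (rule good_Lam)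
    have Sq: "S (qv a b c (mk n) (nk n)) \<noteq> 0"
      using qnz qv_S[of a b c] abc by (auto simp: qv_def add_nonneg_eq_0_iff)
    have Sr: "S (r n) \<noteq> 0" using Sq N0 unfolding re by (simp add: Sscale)
    have "(1 / S (r n)) *\<^sub>R r n = hat H (r n)" by (simp add: hat_eq Sr)
    also have "\<dots> = hat H (qv a b c (mk n) (nk n))" unfolding re by (rule hat_scale[OF Sq]) (simp add: N0)
    finally show "(1 / S (r n)) *\<^sub>R r n \<in> Lam" using L by simp
  qed
  then have "(1 / S p) *\<^sub>R p \<in> Lam" using Lam_closed hlim by (intro Lim_in_closed_set) auto
  then show ?thesis using assms by simp
qed

end

lemma finite_Ints_bounded: "finite {x::real. x \<in> \<int> \<and> \<bar>x\<bar> \<le> R}"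
proof -
  have "{x::real. x \<in> \<int> \<and> \<bar>x\<bar> \<le> R} \<subseteq> of_int ` {-\<lceil>R\<rceil>..\<lceil>R\<rceil>}"
  proof
    fix x :: real assume "x \<in> {x. x \<in> \<int> \<and> \<bar>x\<bar> \<le> R}"
    then obtain k where k: "x = of_int k" "\<bar>of_int k\<bar> \<le> R" by (auto elim: Ints_cases)
    then have "\<bar>k\<bar> \<le> \<lceil>R\<rceil>" by (metis ceiling_mono ceiling_of_int of_int_abs)
    then show "x \<in> of_int ` {-\<lceil>R\<rceil>..\<lceil>R\<rceil>}" using k by (auto simp: abs_le_iff)
  qed
  then show ?thesis by (rule finite_subset) simp
qed

lemma co_bound: "\<exists>k>0. \<forall>v. \<bar>co c v\<bar> \<le> norm v * k"
  using bounded_linear.pos_bounded[OF lin_co[THEN linear_conv_bounded_linear[THEN iffD1]]] by auto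

lemma finite_Lat: "finite (Lat \<inter> cball 0 R)"
proof -
  have "\<forall>c. \<exists>k>0. \<forall>v. \<bar>co c v\<bar> \<le> norm v * k" using co_bound by blast
  then obtain kf where kf0: "\<forall>c. kf c > 0 \<and> (\<forall>v. \<bar>co c v\<bar> \<le> norm v * kf c)" by metis
  then have kf: "\<And>c v. \<bar>co c v\<bar> \<le> norm v * kf c" by blast
  let ?phi = "\<lambda>v. restrict (\<lambda>c. co c v) D"
  have inj: "inj_on ?phi (Lat \<inter> cball 0 R)"
  proof (rule inj_onI)
    fix u v assume "?phi u = ?phi v"
    then have "\<forall>c\<in>D. co c u = co c v" by (metis restrict_apply')
    then show "u = v" using expand[of u] expand[of v] by (metis (no_types, lifting) sum.cong)
  qed
  have "?phi ` (Lat \<inter> cball 0 R) \<subseteq> PiE D (\<lambda>c. {x::real. x \<in> \<int> \<and> \<bar>x\<bar> \<le> R * kf c})"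
  proof
    fix y assume "y \<in> ?phi ` (Lat \<inter> cball 0 R)"
    then obtain v where v: "v \<in> Lat" "norm v \<le> R" "y = ?phi v" by auto
    have "\<bar>co c v\<bar> \<le> R * kf c" for c
    proof -
      have "kf c \<ge> 0" using kf0 less_imp_le by blast
      then show ?thesis using kf[of c v] v(2) by (meson mult_right_mono order_trans)
    qed
    then show "y \<in> PiE D (\<lambda>c. {x::real. x \<in> \<int> \<and> \<bar>x\<bar> \<le> R * kf c})"
      using v unfolding Lat_def by auto
  qed
  moreover have "finite (PiE D (\<lambda>c. {x::real. x \<in> \<int> \<and> \<bar>x\<bar> \<le> R * kf c}))"
    by (intro finite_PiE finD finite_Ints_bounded)
  ultimately show ?thesis using inj inj_on_finite by blast
qed

lemma G_expand: "w \<in> Gam \<Longrightarrow> w v = (\<Sum>c\<in>D. co c v *\<^sub>R w c)"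
proof -
  assume w: "w \<in> Gam"
  have "w v = w (\<Sum>c\<in>D. co c v *\<^sub>R c)" by (subst expand) simp
  also have "\<dots> = (\<Sum>c\<in>D. w (co c v *\<^sub>R c))" by (rule linear_sum[OF G_lin[OF w]])
  also have "\<dots> = (\<Sum>c\<in>D. co c v *\<^sub>R w c)" by (simp add: G_scale[OF w])
  finally show ?thesis .
qed

lemma finite_G: "finite {w \<in> Gam. \<forall>c\<in>D. norm (w c) \<le> R}"
proof -
  let ?F = "{w \<in> Gam. \<forall>c\<in>D. norm (w c) \<le> R}"
  have inj: "inj_on (\<lambda>w. restrict w D) ?F"
  proof (rule inj_onI)
    fix u v assume "u \<in> ?F" "v \<in> ?F" "restrict u D = restrict v D"
    then have "\<forall>c\<in>D. u c = v c" "u \<in> Gam" "v \<in> Gam" by (auto dest: fun_cong[where x=c for c] simp: restrict_def fun_eq_iff) (metis)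
    show "u = v"
    proof
      fix x
      have "u x = (\<Sum>c\<in>D. co c x *\<^sub>R u c)" by (rule G_expand[OF \<open>u \<in> Gam\<close>])
      also have "\<dots> = (\<Sum>c\<in>D. co c x *\<^sub>R v c)" using \<open>\<forall>c\<in>D. u c = v c\<close> by simp
      also have "\<dots> = v x" by (rule G_expand[OF \<open>v \<in> Gam\<close>, symmetric])
      finally show "u x = v x" .
    qed
  qed
  have "(\<lambda>w. restrict w D) ` ?F \<subseteq> PiE D (\<lambda>_. Lat \<inter> cball 0 R)"
    using G_Lat D_Lat by auto
  moreover have "finite (PiE D (\<lambda>_. Lat \<inter> cball 0 R))" by (intro finite_PiE finD finite_Lat)
  ultimately show ?thesis using inj inj_on_finite by blast
qed

end



context apo0 begin

lemma escape: assumes g: "\<And>n. g n \<in> Gam" "(\<lambda>n. act (g n) x0) \<longlonglongrightarrow> p" "\<And>n. act (g n) x0 \<noteq> p"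
  shows "\<forall>\<^sub>F n in sequentially. \<exists>c\<in>D. K < norm (g n c)"
proof -
  let ?F = "{w \<in> Gam. \<forall>c\<in>D. norm (w c) \<le> K}"
  have "\<forall>w\<in>?F. \<forall>\<^sub>F n in sequentially. g n \<noteq> w"
  proof
    fix w assume "w \<in> ?F"
    show "\<forall>\<^sub>F n in sequentially. g n \<noteq> w"
    proof (cases "act w x0 = p")
      case True
      have "g n \<noteq> w" for n using g(3)[of n] True by auto
      then show ?thesis by (intro always_eventually) blast
    next
      case False
      have "\<forall>\<^sub>F n in sequentially. act (g n) x0 \<noteq> act w x0"
        using g(2) False by (intro tendsto_imp_eventually_ne) auto
      then show ?thesis by (rule eventually_mono) auto
    qed
  qed
  then have "\<forall>\<^sub>F n in sequentially. \<forall>w\<in>?F. g n \<noteq> w"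
    by (rule eventually_ball_finite[OF finite_G])
  then show ?thesis
  proof (rule eventually_mono)
    fix n assume "\<forall>w\<in>?F. g n \<noteq> w"
    then have "g n \<notin> ?F" by blast
    then have "\<not> (\<forall>c\<in>D. norm (g n c) \<le> K)" using g(1)[of n] by blast
    then show "\<exists>c\<in>D. K < norm (g n c)" by (simp add: not_le)
  qed
qed

lemma conv: assumes "p \<in> Lam"
  shows "\<exists>g q. (\<forall>n. g n \<in> Gam) \<and> q \<in> {(1/2) *\<^sub>R (\<alpha> + \<beta>), (1/2) *\<^sub>R (\<alpha> + \<gamma>)} \<and> (\<lambda>n. act (g n) q) \<longlonglongrightarrow> p"
proof -
  obtain g where g: "\<And>n. g n \<in> Gam" "(\<lambda>n. act (g n) x0) \<longlonglongrightarrow> p" "\<And>n. act (g n) x0 \<noteq> p"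
    using Lam_seq[OF assms] by blast
  have "\<forall>n. \<exists>h. h \<in> Gam \<and> h \<circ> g n = id \<and> g n \<circ> h = id" using G_inv g(1) by blast
  then obtain h where h: "\<And>n. h n \<in> Gam" "\<And>n. h n \<circ> g n = id" "\<And>n. g n \<circ> h n = id" by metis
  have adj: "B (g n u) v = B u (h n v)" for n u v
  proof -
    have "g n (h n v) = v" using h(3)[of n] by (metis comp_apply id_apply)
    then have "B (g n u) v = B (g n u) (g n (h n v))" by simp
    also have "\<dots> = B u (h n v)" by (rule G_iso[OF g(1)])
    finally show ?thesis .
  qed
  define NN where "NN n = (\<Sum>c\<in>D. norm (g n c) + norm (h n c))" for n
  have NN_ge: "norm (g n c) \<le> NN n" "norm (h n c) \<le> NN n" if "c \<in> D" for n c
  proof -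
    have "norm (g n c) + norm (h n c) \<le> NN n" unfolding NN_def
      by (rule member_le_sum[OF that]) (auto simp: finD)
    then show "norm (g n c) \<le> NN n" "norm (h n c) \<le> NN n"
      using norm_ge_zero[of "g n c"] norm_ge_zero[of "h n c"] by linarith+
  qed
  have NN_top: "filterlim NN at_top sequentially"
    unfolding filterlim_at_top
  proof
    fix K
    show "\<forall>\<^sub>F n in sequentially. K \<le> NN n"
      using escape[OF g, of K]
    proof (rule eventually_mono)
      fix n assume "\<exists>c\<in>D. K < norm (g n c)"
      then obtain c where "c \<in> D" "K < norm (g n c)" by blast
      then show "K \<le> NN n" using NN_ge(1)[of c n] by linarith
    qed
  qed
  define G where "G n v = (1 / NN n) *\<^sub>R g n v" for n v
  define G' where "G' n v = (1 / NN n) *\<^sub>R h n v" for n v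
  have bnd: "norm (G n c) \<le> 1" "norm (G' n c) \<le> 1" if "c \<in> D" for n c
    using NN_ge[OF that, of n] by (auto simp: G_def G'_def divide_le_eq_1)
  define T where "T n = (G n \<alpha>, G n \<beta>, G n \<gamma>, G n \<delta>, G' n \<alpha>, G' n \<beta>, G' n \<gamma>, G' n \<delta>)" for n
  let ?C = "cball (0::'a) 1"
  have "range T \<subseteq> ?C \<times> ?C \<times> ?C \<times> ?C \<times> ?C \<times> ?C \<times> ?C \<times> ?C"
    using bnd by (auto simp: T_def D_def)
  moreover have "bounded (?C \<times> ?C \<times> ?C \<times> ?C \<times> ?C \<times> ?C \<times> ?C \<times> ?C)"
    by (intro bounded_Times bounded_cball)
  ultimately have "bounded (range T)" by (rule bounded_subset[rotated])
  then obtain l r where r: "strict_mono r" and lim: "(T \<circ> r) \<longlonglongrightarrow> l"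
    using bounded_imp_convergent_subsequence by blast
  have lim': "(\<lambda>n. T (r n)) \<longlonglongrightarrow> l" using lim by (simp add: o_def)
  note tf = tendsto_fst[OF lim'] and ts = tendsto_snd[OF lim']
  note ts2 = tendsto_snd[OF ts] note ts3 = tendsto_snd[OF ts2] note ts4 = tendsto_snd[OF ts3]
  note ts5 = tendsto_snd[OF ts4] note ts6 = tendsto_snd[OF ts5] note ts7 = tendsto_snd[OF ts6]
  have "\<forall>c\<in>D. \<exists>m. (\<lambda>n. G (r n) c) \<longlonglongrightarrow> m"
    using tf tendsto_fst[OF ts] tendsto_fst[OF ts2] tendsto_fst[OF ts3] by (auto simp: T_def D_def)
  then obtain mG where mG: "\<And>c. c \<in> D \<Longrightarrow> (\<lambda>n. G (r n) c) \<longlonglongrightarrow> mG c" by metis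
  have "\<forall>c\<in>D. \<exists>m. (\<lambda>n. G' (r n) c) \<longlonglongrightarrow> m"
    using tendsto_fst[OF ts4] tendsto_fst[OF ts5] tendsto_fst[OF ts6] ts7 by (auto simp: T_def D_def)
  then obtain mG' where mG': "\<And>c. c \<in> D \<Longrightarrow> (\<lambda>n. G' (r n) c) \<longlonglongrightarrow> mG' c" by metis
  define M where "M v = (\<Sum>c\<in>D. co c v *\<^sub>R mG c)" for v
  define M' where "M' v = (\<Sum>c\<in>D. co c v *\<^sub>R mG' c)" for v
  have Gexp: "G n v = (\<Sum>c\<in>D. co c v *\<^sub>R G n c)" for n v
    unfolding G_def by (subst G_expand[OF g(1)]) (simp add: scaleR_sum_right)
  have G'exp: "G' n v = (\<Sum>c\<in>D. co c v *\<^sub>R G' n c)" for n v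
    unfolding G'_def by (subst G_expand[OF h(1)]) (simp add: scaleR_sum_right)
  have GM: "(\<lambda>n. G (r n) v) \<longlonglongrightarrow> M v" for v
    unfolding Gexp[of _ v] M_def
  proof (rule tendsto_sum)
    fix c assume "c \<in> D"
    then show "(\<lambda>n. co c v *\<^sub>R G (r n) c) \<longlonglongrightarrow> co c v *\<^sub>R mG c" by (rule tendsto_scaleR[OF tendsto_const mG])
  qed
  have GM': "(\<lambda>n. G' (r n) v) \<longlonglongrightarrow> M' v" for v
    unfolding G'exp[of _ v] M'_def
  proof (rule tendsto_sum)
    fix c assume "c \<in> D"
    then show "(\<lambda>n. co c v *\<^sub>R G' (r n) c) \<longlonglongrightarrow> co c v *\<^sub>R mG' c" by (rule tendsto_scaleR[OF tendsto_const mG'])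
  qed
  have NNr: "filterlim (\<lambda>n. NN (r n)) at_top sequentially"
    using filterlim_compose[OF NN_top filterlim_subseq[OF r]] by simp
  have inv0: "(\<lambda>n. 1 / NN (r n)) \<longlonglongrightarrow> 0"
    using tendsto_inverse_0_at_top[OF NNr] by (simp add: divide_inverse)
  have pos: "\<forall>\<^sub>F n in sequentially. 1 \<le> NN (r n)" using NNr unfolding filterlim_at_top by blast
  have nullM: "B (M u) (M v) = 0" for u v
  proof -
    have "(\<lambda>n. B (G (r n) u) (G (r n) v)) \<longlonglongrightarrow> B (M u) (M v)" by (intro tendsto_B GM)
    moreover have "B (G (r n) u) (G (r n) v) = (1 / NN (r n))^2 * B u v" for n
      by (simp add: G_def Bscale G_iso[OF g(1)] power2_eq_square)
    moreover have "(\<lambda>n. (1 / NN (r n))^2 * B u v) \<longlonglongrightarrow> 0^2 * B u v" by (intro tendsto_intros inv0)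
    ultimately show ?thesis using LIMSEQ_unique by fastforce
  qed
  have nullM': "B (M' u) (M' v) = 0" for u v
  proof -
    have "(\<lambda>n. B (G' (r n) u) (G' (r n) v)) \<longlonglongrightarrow> B (M' u) (M' v)" by (intro tendsto_B GM')
    moreover have "B (G' (r n) u) (G' (r n) v) = (1 / NN (r n))^2 * B u v" for n
      by (simp add: G'_def Bscale G_iso[OF h(1)] power2_eq_square)
    moreover have "(\<lambda>n. (1 / NN (r n))^2 * B u v) \<longlonglongrightarrow> 0^2 * B u v" by (intro tendsto_intros inv0)
    ultimately show ?thesis using LIMSEQ_unique by fastforce
  qed
  have adjM: "B (M u) v = B u (M' v)" for u v
  proof -
    have "(\<lambda>n. B (G (r n) u) v) \<longlonglongrightarrow> B (M u) v" by (intro tendsto_B GM tendsto_const)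
    moreover have "(\<lambda>n. B u (G' (r n) v)) \<longlonglongrightarrow> B u (M' v)" by (intro tendsto_B GM' tendsto_const)
    moreover have "B (G (r n) u) v = B u (G' (r n) v)" for n
      by (simp add: G_def G'_def Bscale adj)
    ultimately show ?thesis using LIMSEQ_unique by fastforce
  qed
  have sum1: "(\<Sum>c\<in>D. norm (mG c) + norm (mG' c)) = 1"
  proof -
    have "(\<lambda>n. \<Sum>c\<in>D. norm (G (r n) c) + norm (G' (r n) c)) \<longlonglongrightarrow> (\<Sum>c\<in>D. norm (mG c) + norm (mG' c))"
    proof (rule tendsto_sum)
      fix c assume "c \<in> D"
      then show "(\<lambda>n. norm (G (r n) c) + norm (G' (r n) c)) \<longlonglongrightarrow> norm (mG c) + norm (mG' c)"
        by (intro tendsto_add tendsto_norm mG mG')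
    qed
    moreover have "(\<lambda>n. \<Sum>c\<in>D. norm (G (r n) c) + norm (G' (r n) c)) \<longlonglongrightarrow> 1"
    proof (rule tendsto_eventually, rule eventually_mono[OF pos])
      fix n assume n: "1 \<le> NN (r n)"
      have "(\<Sum>c\<in>D. norm (G (r n) c) + norm (G' (r n) c)) = (\<Sum>c\<in>D. (norm (g (r n) c) + norm (h (r n) c)) / NN (r n))"
        using n by (intro sum.cong) (auto simp: G_def G'_def add_divide_distrib)
      also have "\<dots> = NN (r n) / NN (r n)" by (simp only: NN_def sum_divide_distrib)
      also have "\<dots> = 1" using n by simp
      finally show "(\<Sum>c\<in>D. norm (G (r n) c) + norm (G' (r n) c)) = 1" .
    qed
    ultimately show ?thesis using LIMSEQ_unique by blast
  qed
  have MD: "M c = mG c" "M' c = mG' c" if "c \<in> D" for c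
  proof -
    have "M c = (\<Sum>c'\<in>D. (if c = c' then mG c' else 0))"
      unfolding M_def using that by (intro sum.cong) (auto simp: coD)
    then show "M c = mG c" using that finD by (simp add: sum.delta)
    have "M' c = (\<Sum>c'\<in>D. (if c = c' then mG' c' else 0))"
      unfolding M'_def using that by (intro sum.cong) (auto simp: coD)
    then show "M' c = mG' c" using that finD by (simp add: sum.delta)
  qed
  have ex1: "\<exists>c1\<in>D. mG c1 \<noteq> 0"
  proof (rule ccontr)
    assume A: "\<not> (\<exists>c1\<in>D. mG c1 \<noteq> 0)"
    then have "M v = 0" for v unfolding M_def by simp
    then have M0: "M v = 0" for v by simp
    have "M' v = 0" for v
    proof (rule nondeg)
      fix u
      have "B u (M' v) = B (M u) v" by (rule adjM[symmetric])
      also have "\<dots> = B u 0" by (simp add: M0 Bzero)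
      finally show "B u (M' v) = B u 0" .
    qed
    then have "mG' c = 0" if "c \<in> D" for c using MD(2)[OF that] by simp
    then show False using sum1 A by simp
  qed
  have ex2: "\<exists>c2\<in>D. mG' c2 \<noteq> 0"
  proof (rule ccontr)
    assume A: "\<not> (\<exists>c2\<in>D. mG' c2 \<noteq> 0)"
    then have "M' v = 0" for v unfolding M'_def by simp
    then have M'0: "M' v = 0" for v by simp
    have "M v = 0" for v
    proof (rule nondeg)
      fix u
      have "B u (M v) = B (M v) u" by (rule sym)
      also have "\<dots> = B v (M' u)" by (rule adjM)
      also have "\<dots> = B u 0" by (simp add: M'0 Bzero)
      finally show "B u (M v) = B u 0" .
    qed
    then have "mG c = 0" if "c \<in> D" for c using MD(1)[OF that] by simp
    then show False using sum1 A by simp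
  qed
  obtain c1 where c1: "c1 \<in> D" "mG c1 \<noteq> 0" using ex1 by blast
  obtain c2 where c2: "c2 \<in> D" "mG' c2 \<noteq> 0" using ex2 by blast
  define a where "a = M c1"
  define b where "b = M' c2"
  have anz: "a \<noteq> 0" and bnz: "b \<noteq> 0" using c1 c2 MD by (auto simp: a_def b_def)
  have bnull: "B b b = 0" unfolding b_def by (rule nullM')
  have Sa: "S a \<noteq> 0" using S_nonzero anz nullM unfolding a_def by simp
  have key: "(\<lambda>n. act (g (r n)) y) \<longlonglongrightarrow> (1 / S a) *\<^sub>R a" if y: "B y b \<noteq> 0" "\<And>n. S (g n y) \<noteq> 0" for y
  proof -
    have "B (M y) c2 = B y b" unfolding b_def by (rule adjM)
    then have Mynz: "M y \<noteq> 0" using y(1) by (auto simp: Bzero)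
    have SMy: "S (M y) \<noteq> 0" using S_nonzero Mynz nullM by simp
    have "S a *\<^sub>R M y = S (M y) *\<^sub>R a" unfolding a_def by (rule L9) (simp_all add: nullM)
    then have "(1 / (S a * S (M y))) *\<^sub>R (S a *\<^sub>R M y) = (1 / (S a * S (M y))) *\<^sub>R (S (M y) *\<^sub>R a)" by simp
    then have eqa: "(1 / S (M y)) *\<^sub>R M y = (1 / S a) *\<^sub>R a" using Sa SMy by simp
    have l1: "(\<lambda>n. (1 / S (G (r n) y)) *\<^sub>R G (r n) y) \<longlonglongrightarrow> (1 / S a) *\<^sub>R a"
      using tendsto_nrm[OF GM SMy] eqa by simp
    show ?thesis
    proof (rule Lim_transform_eventually[OF l1], rule eventually_mono[OF pos])
      fix n assume n: "1 \<le> NN (r n)"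
      have "(1 / S (G (r n) y)) *\<^sub>R G (r n) y = (1 / S (g (r n) y)) *\<^sub>R g (r n) y"
        unfolding G_def using n by (subst nrm_scale) auto
      also have "\<dots> = act (g (r n)) y" by (simp add: act_def hat_eq y(2))
      finally show "(1 / S (G (r n) y)) *\<^sub>R G (r n) y = act (g (r n)) y" .
    qed
  qed
  have "(\<lambda>n. act (g (r n)) x0) \<longlonglongrightarrow> (1 / S a) *\<^sub>R a"
  proof (rule key)
    show "B x0 b \<noteq> 0" by (rule L10[OF x0neg bnull bnz])
    show "S (g n x0) \<noteq> 0" for n by (rule orbS[OF g(1)])
  qed
  moreover have "(\<lambda>n. act (g (r n)) x0) \<longlonglongrightarrow> p" using LIMSEQ_subseq_LIMSEQ[OF g(2) r] by (simp add: o_def)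
  ultimately have pa: "p = (1 / S a) *\<^sub>R a" using LIMSEQ_unique by blast
  define q1 where "q1 = (1/2) *\<^sub>R (\<alpha> + \<beta>)"
  define q2 where "q2 = (1/2) *\<^sub>R (\<alpha> + \<gamma>)"
  have qprops: "B q q = 0 \<and> S q = 1" if "q \<in> {q1, q2}" for q
    using that Boff SD by (auto simp: q1_def q2_def Badd Bscale Sadd Sscale D_def)
  have q12: "q1 \<noteq> q2"
  proof
    assume "q1 = q2"
    then have "2 *\<^sub>R q1 = 2 *\<^sub>R q2" by simp
    then show False using dist by (simp add: q1_def q2_def)
  qed
  obtain q where q: "q \<in> {q1, q2}" "B q b \<noteq> 0"
  proof -
    have "B q1 b \<noteq> 0 \<or> B q2 b \<noteq> 0"
    proof (rule ccontr)
      assume "\<not> ?thesis"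
      then have "S b *\<^sub>R q1 = S q1 *\<^sub>R b" "S b *\<^sub>R q2 = S q2 *\<^sub>R b"
        using L9[OF _ bnull] qprops by auto
      then have "S b *\<^sub>R q1 = S b *\<^sub>R q2" using qprops by simp
      moreover have "S b \<noteq> 0" using S_nonzero bnull bnz by simp
      ultimately show False using q12 by simp
    qed
    then show thesis using that by blast
  qed
  have qnz: "q \<noteq> 0" using qprops[OF q(1)] by (auto simp: S_def Bzero)
  have Sgq: "S (g n q) \<noteq> 0" for n
    using S_nonzero[of "g n q"] G_iso[OF g(1)] qprops[OF q(1)] G_nz[OF g(1) qnz] by simp
  have "(\<lambda>n. act (g (r n)) q) \<longlonglongrightarrow> p" unfolding pa by (rule key[OF q(2) Sgq])
  then show ?thesis using q(1) g(1) unfolding q1_def q2_def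
    by (intro exI[of _ "\<lambda>n. g (r n)"] exI[of _ q]) simp
qed

lemma main: "Lam = closure (\<Union>w\<in>Gam. (\<lambda>x. hat H (w x)) ` (\<Union>c\<in>D. ({v. B v v = 0} \<inter> H) \<inter> convex hull (D - {c})))"
  (is "_ = closure ?A")
proof
  show "Lam \<subseteq> closure ?A"
  proof
    fix p assume p: "p \<in> Lam"
    obtain g q where gq: "\<And>n. g n \<in> Gam" "q \<in> {(1/2) *\<^sub>R (\<alpha> + \<beta>), (1/2) *\<^sub>R (\<alpha> + \<gamma>)}"
      "(\<lambda>n. act (g n) q) \<longlonglongrightarrow> p"
      using conv[OF p] by blast
    have mid: "(1/2) *\<^sub>R (x + y) \<in> convex hull (D - {c})" if "x \<in> D - {c}" "y \<in> D - {c}" for x y c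
    proof -
      have "(1/2) *\<^sub>R x + (1/2) *\<^sub>R y \<in> convex hull (D - {c})"
        by (rule convexD[OF convex_convex_hull hull_inc[OF that(1)] hull_inc[OF that(2)]]) auto
      then show ?thesis by (simp add: scaleR_add_right)
    qed
    have qQ: "B q q = 0" "q \<in> H" using gq(2) Boff SD by (auto simp: H_eq Badd Bscale Sadd Sscale D_def)
    have "\<exists>c\<in>D. q \<in> convex hull (D - {c})"
    proof (cases "q = (1/2) *\<^sub>R (\<alpha> + \<beta>)")
      case True
      then show ?thesis using mid[of \<alpha> \<gamma> \<beta>] dist by (intro bexI[of _ \<gamma>]) (auto simp: D_def)
    next
      case False
      then have "q = (1/2) *\<^sub>R (\<alpha> + \<gamma>)" using gq(2) by auto
      then show ?thesis using mid[of \<alpha> \<beta> \<gamma>] dist by (intro bexI[of _ \<beta>]) (auto simp: D_def)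
    qed
    then obtain c where c: "c \<in> D" "q \<in> convex hull (D - {c})" by blast
    have qU: "q \<in> (\<Union>c\<in>D. ({v. B v v = 0} \<inter> H) \<inter> convex hull (D - {c}))"
      using c qQ by (intro UN_I[OF c(1)]) simp
    have "act (g n) q \<in> ?A" for n unfolding act_def
      by (rule UN_I[OF gq(1)[of n]]) (rule imageI[OF qU])
    then show "p \<in> closure ?A" unfolding closure_sequential using gq(3)
      by (intro exI[of _ "\<lambda>n. act (g n) q"]) simp
  qed
next
  have "?A \<subseteq> Lam"
  proof
    fix x assume "x \<in> ?A"
    then obtain w where w1: "w \<in> Gam" "x \<in> (\<lambda>x. hat H (w x)) ` (\<Union>c\<in>D. ({v. B v v = 0} \<inter> H) \<inter> convex hull (D - {c}))"
      by (rule UN_E)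
    then obtain y where y: "y \<in> (\<Union>c\<in>D. ({v. B v v = 0} \<inter> H) \<inter> convex hull (D - {c}))" "x = hat H (w y)"
      using w1(2) by (auto simp only: image_iff)
    obtain c where c: "c \<in> D" "y \<in> ({v. B v v = 0} \<inter> H) \<inter> convex hull (D - {c})"
      using y(1) by (auto simp only: UN_iff)
    have w: "w \<in> Gam" "c \<in> D" "B y y = 0" "y \<in> H" "y \<in> convex hull (D - {c})" "x = hat H (w y)"
      using w1 y c by auto
    have "card (D - {c}) = 3" using cardD w(2) finD by simp
    then obtain a b e where abe: "D - {c} = {a, b, e}" "a \<noteq> b" "b \<noteq> e" "a \<noteq> e" by (auto simp: card_3_iff)
    then have inD: "a \<in> D" "b \<in> D" "e \<in> D" by blast+
    have "y \<in> Lam"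
      by (rule circle[OF inD abe(2) abe(4) abe(3)]) (use w abe in \<open>auto simp: H_eq\<close>)
    then have "act w y \<in> Lam" by (rule Lam_inv[OF _ w(1)])
    then show "x \<in> Lam" using w(6) by (simp add: act_def)
  qed
  then show "closure ?A \<subseteq> Lam" using Lam_closed by (rule closure_minimal)
qed

end

theorem proposition4p3:
  fixes B :: "'v::euclidean_space \<Rightarrow> 'v \<Rightarrow> real"
    and \<alpha> \<beta> \<gamma> \<delta> :: 'v
    and x0 :: 'v
  assumes dim: "DIM('v) = 4"
    and bil: "bilinear B"
    and sym: "\<And>u v. B u v = B v u"
    and sig: "signature_3_1 B"
    and basis: "independent {\<alpha>, \<beta>, \<gamma>, \<delta>}" "span {\<alpha>, \<beta>, \<gamma>, \<delta>} = UNIV"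
    and diag: "\<And>c. c \<in> {\<alpha>, \<beta>, \<gamma>, \<delta>} \<Longrightarrow> B c c = 1"
    and offdiag: "\<And>c d. c \<in> {\<alpha>, \<beta>, \<gamma>, \<delta>} \<Longrightarrow> d \<in> {\<alpha>, \<beta>, \<gamma>, \<delta>} \<Longrightarrow> c \<noteq> d
                  \<Longrightarrow> B c d = -1"
    and x0: "x0 \<in> {v. B v v < 0} \<inter> affine hull {\<alpha>, \<beta>, \<gamma>, \<delta>}"
  shows
    "let \<Delta> = {\<alpha>, \<beta>, \<gamma>, \<delta>};
         \<H> = affine hull \<Delta>;
         \<Gamma> = refl_group B \<Delta>;
         act = (\<lambda>w x. hat \<H> (w x));
         Q = {v. B v v = 0} \<inter> \<H>;
         h = (\<lambda>c. Q \<inter> convex hull (\<Delta> - {c}));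
         \<A> = (\<Union>w\<in>\<Gamma>. act w ` (\<Union>c\<in>\<Delta>. h c))
     in limit_set \<Gamma> act x0 = closure \<A>"
  proof -
  have card4: "card {\<alpha>, \<beta>, \<gamma>, \<delta>} = 4"
    using basis_card_eq_dim[of "{\<alpha>, \<beta>, \<gamma>, \<delta>}" UNIV] basis dim by simp
  have dist: "distinct [\<alpha>, \<beta>, \<gamma>, \<delta>]"
    using card4 by (auto simp: card_insert_if split: if_splits)
  interpret apo B \<alpha> \<beta> \<gamma> \<delta>
    by unfold_locales (use bil sym dist basis diag offdiag in auto)
  interpret apo0 B \<alpha> \<beta> \<gamma> \<delta> x0
    by unfold_locales (use x0 H_eq in \<open>auto simp: H_def D_def\<close>)
  show ?thesis
    using main unfolding Let_def limit_set_def Lam_def Orb_def act_def Gam_def H_def D_def .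
qed

end
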